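(* Let $\boldsymbol\mu=\{\mu_t\}_{t>0}$ be a measurable factorizing family over $[0,1]\times L$, where $L$ is compact. Then the random-set system $\mathbb E^{\boldsymbol\mu}$ is spatial.
   Context: $L$ is a (compact) second countable Hausdorff space. For $t>0$, $\mathscr C_t$ is the space of closed subsets of $[0,t]\times L$ with the Borel $\sigma$-field $\Sigma_t$ of the Fell topology; $\oplus_{s,t}(Z_1,Z_2)=Z_1\cup\{(s+r,\ell):(r,\ell)\in Z_2\}$; $\sigma_t(Z)=\{(r/t,\ell):(r,\ell)\in Z\}$. A family of probability measures $\{\mu_t\}$ on $\mathscr C_t$ is a measurable factorizing family if: (i) $\mu_{s+t}\sim(\mu_s\otimes\mu_t)\circ\oplus_{s,t}^{-1}$ (mutual absolute continuity); (ii) $\mu_t(\{Z:Z\cap(\{r\}\times L)\neq\varnothing\})=0$ for all $t>0,r\in[0,t]$; (iii) no $\mu_t$ is supported on finitely many atoms; (iv a) there is a countable ring $\mathcal R\subset\Sigma_1$ generating $\Sigma_1$ with $t\mapsto(\sigma_t)_*\mu_t(A)$ Borel for each $A\in\mathcal R$; (iv b) there is a Borel $\Delta:(0,\infty)^2\times\mathscr C_1\to(0,\infty)$ with $\Delta(s,t,\sigma_{s+t}(Z))=\Delta_{s,t}(Z)$ $\mu_{s+t}$-a.e., $\Delta_{s,t}=d((\mu_s\otimes\mu_t)\circ\oplus_{s,t}^{-1})/d\mu_{s+t}$. The random-set system $\mathbb E^{\boldsymbol\mu}$ is the Arveson system with fibers $E_t=L^2(\mathscr C_t,\mu_t)$ and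 multiplication $U_{s,t}(f\otimes g)(Z)=\Delta_{s,t}(Z)^{1/2}f(Z\cap([0,s]\times L))g((Z\cap([s,s+t]\times L))-(s,0))$ (Borel structure generated by the sections $\mathbf 1_A$, $A\in\mathcal R$, after scaling by $\sigma_t$). It is spatial if it admits a unit: a nonzero Borel section $u_t\in E_t$ with $u_{s+t}=U_{s,t}(u_s\otimes u_t)$. *)

theory Defs
  imports "HOL-Probability.Probability"
begin

definition closed_sets_on :: "real \<Rightarrow> (real \<times> 'l::topological_space) set set" where
  "closed_sets_on t = {Z. closed Z \<and> Z \<subseteq> {0..t} \<times> UNIV}"

definition fell_topology :: "real \<Rightarrow> (real \<times> 'l::topological_space) set topology" where
  "fell_topology t = subtopology
     (topology_generated_by
        ({{F. F \<inter> K = {}} | K. compact K \<and> K \<subseteq> {0..t} \<times> UNIV} \<union>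
         {{F. F \<inter> G \<noteq> {}} | G. openin (top_of_set ({0..t} \<times> UNIV)) G}))
     (closed_sets_on t)"

definition CM :: "real \<Rightarrow> (real \<times> 'l::topological_space) set measure" where
  "CM t = sigma (closed_sets_on t) {U. openin (fell_topology t) U}"

definition shift_set :: "real \<Rightarrow> (real \<times> 'l) set \<Rightarrow> (real \<times> 'l) set" where
  "shift_set s Z = (\<lambda>(r, l). (s + r, l)) ` Z"

definition oplus :: "real \<Rightarrow> (real \<times> 'l) set \<times> (real \<times> 'l) set \<Rightarrow> (real \<times> 'l) set" where
  "oplus s = (\<lambda>(Z1, Z2). Z1 \<union> shift_set s Z2)"

definition time_scale :: "real \<Rightarrow> (real \<times> 'l) set \<Rightarrow> (real \<times> 'l) set" where
  "time_scale t Z = (\<lambda>(r, l). (r / t, l)) ` Z"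

definition concat_measure ::
  "(real \<Rightarrow> (real \<times> 'l::topological_space) set measure) \<Rightarrow> real \<Rightarrow> real \<Rightarrow> (real \<times> 'l) set measure" where
  "concat_measure \<mu> s t = distr (\<mu> s \<Otimes>\<^sub>M \<mu> t) (CM (s + t)) (oplus s)"

definition Delta_st ::
  "(real \<Rightarrow> (real \<times> 'l::topological_space) set measure) \<Rightarrow> real \<Rightarrow> real \<Rightarrow> (real \<times> 'l) set \<Rightarrow> real" where
  "Delta_st \<mu> s t = (\<lambda>Z. enn2real (RN_deriv (\<mu> (s + t)) (concat_measure \<mu> s t) Z))"

definition pos_reals :: "real measure" where
  "pos_reals = restrict_space borel {0<..}"

text \<open>Measurable factorizing family, with the witnesses R (condition (iv a)) and
  Delta (condition (iv b)) made explicit.\<close>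
definition measurable_factorizing_family ::
  "(real \<Rightarrow> (real \<times> 'l::topological_space) set measure) \<Rightarrow> (real \<times> 'l) set set set
   \<Rightarrow> (real \<Rightarrow> real \<Rightarrow> (real \<times> 'l) set \<Rightarrow> real) \<Rightarrow> bool" where
  "measurable_factorizing_family \<mu> R \<Delta> \<longleftrightarrow>
     \<comment> \<open>each mu_t is a probability measure on (C_t, Sigma_t)\<close>
     (\<forall>t>0. prob_space (\<mu> t) \<and> sets (\<mu> t) = sets (CM t)) \<and>
     \<comment> \<open>(i) mutual absolute continuity\<close>
     (\<forall>s>0. \<forall>t>0. absolutely_continuous (\<mu> (s + t)) (concat_measure \<mu> s t) \<and>
                  absolutely_continuous (concat_measure \<mu> s t) (\<mu> (s + t))) \<and>
     \<comment> \<open>(ii) no fixed atoms in time\<close>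
     (\<forall>t>0. \<forall>r\<in>{0..t}. emeasure (\<mu> t) {Z \<in> space (\<mu> t). Z \<inter> ({r} \<times> UNIV) \<noteq> {}} = 0) \<and>
     \<comment> \<open>(iii) no mu_t is supported on finitely many atoms\<close>
     (\<forall>t>0. \<not> (\<exists>F. finite F \<and> (AE Z in \<mu> t. Z \<in> F))) \<and>
     \<comment> \<open>(iv a) countable ring generating Sigma_1, with Borel dependence on t\<close>
     countable R \<and> ring_of_sets (closed_sets_on 1) R \<and>
     sigma_sets (closed_sets_on 1) R = sets (CM 1) \<and>
     (\<forall>A\<in>R. (\<lambda>t. measure (distr (\<mu> t) (CM 1) (time_scale t)) A) \<in> borel_measurable pos_reals) \<and>
     \<comment> \<open>(iv b) Borel jointly measurable version of the Radon-Nikodym derivatives\<close>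
     (\<lambda>((s, t), Z). \<Delta> s t Z) \<in> borel_measurable ((pos_reals \<Otimes>\<^sub>M pos_reals) \<Otimes>\<^sub>M CM 1) \<and>
     (\<forall>s>0. \<forall>t>0. \<forall>Z\<in>closed_sets_on 1. \<Delta> s t Z > 0) \<and>
     (\<forall>s>0. \<forall>t>0. AE Z in \<mu> (s + t). \<Delta> s t (time_scale (s + t) Z) = Delta_st \<mu> s t Z)"

definition U_prod ::
  "(real \<Rightarrow> (real \<times> 'l::topological_space) set measure) \<Rightarrow> real \<Rightarrow> real
   \<Rightarrow> ((real \<times> 'l) set \<Rightarrow> complex) \<Rightarrow> ((real \<times> 'l) set \<Rightarrow> complex) \<Rightarrow> (real \<times> 'l) set \<Rightarrow> complex" where
  "U_prod \<mu> s t f g = (\<lambda>Z. complex_of_real (sqrt (Delta_st \<mu> s t Z)) *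
      f (Z \<inter> ({0..s} \<times> UNIV)) *
      g ((\<lambda>(r, l). (r - s, l)) ` (Z \<inter> ({s..s + t} \<times> UNIV))))"

definition in_L2 :: "'a measure \<Rightarrow> ('a \<Rightarrow> complex) \<Rightarrow> bool" where
  "in_L2 M f \<longleftrightarrow> f \<in> borel_measurable M \<and> integrable M (\<lambda>x. (cmod (f x))\<^sup>2)"

text \<open>Borel sections of E^mu: sections u_t in E_t whose inner products with the generating
  sections t \<mapsto> 1_A o sigma_t (A in R) depend Borel-measurably on t.\<close>
definition borel_section ::
  "(real \<Rightarrow> (real \<times> 'l::topological_space) set measure) \<Rightarrow> (real \<times> 'l) set set set
   \<Rightarrow> (real \<Rightarrow> (real \<times> 'l) set \<Rightarrow> complex) \<Rightarrow> bool" where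
  "borel_section \<mu> R u \<longleftrightarrow>
     (\<forall>t>0. in_L2 (\<mu> t) (u t)) \<and>
     (\<forall>A\<in>R. (\<lambda>t. \<integral>Z. u t Z * indicator A (time_scale t Z) \<partial>\<mu> t) \<in> borel_measurable pos_reals)"

definition is_unit ::
  "(real \<Rightarrow> (real \<times> 'l::topological_space) set measure) \<Rightarrow> (real \<times> 'l) set set set
   \<Rightarrow> (real \<Rightarrow> (real \<times> 'l) set \<Rightarrow> complex) \<Rightarrow> bool" where
  "is_unit \<mu> R u \<longleftrightarrow>
     borel_section \<mu> R u \<and>
     (\<exists>t>0. \<not> (AE Z in \<mu> t. u t Z = 0)) \<and>
     (\<forall>s>0. \<forall>t>0. AE Z in \<mu> (s + t). u (s + t) Z = U_prod \<mu> s t (u s) (u t) Z)"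

definition spatial_random_set_system ::
  "(real \<Rightarrow> (real \<times> 'l::topological_space) set measure) \<Rightarrow> (real \<times> 'l) set set set \<Rightarrow> bool" where
  "spatial_random_set_system \<mu> R \<longleftrightarrow> (\<exists>u. is_unit \<mu> R u)"

end

theory Submission imports Defs begin

lemma fell_open_sub: "openin (fell_topology t) U \<Longrightarrow> U \<subseteq> closed_sets_on t"
proof -
  assume "openin (fell_topology t) U"
  hence "U \<subseteq> topspace (fell_topology t)" by (rule openin_subset)
  thus ?thesis by (simp add: fell_topology_def)
qed

lemma sets_CM: "sets (CM t) = sigma_sets (closed_sets_on t) {U. openin (fell_topology t) U}"
  unfolding CM_def by (rule sets_measure_of) (auto dest: fell_open_sub)

lemma space_CM: "space (CM t) = closed_sets_on t"
  unfolding CM_def by (rule space_measure_of) (auto dest: fell_open_sub)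

lemma open_in_CM: "openin (fell_topology t) U \<Longrightarrow> U \<in> sets (CM t)"
  unfolding sets_CM by auto

lemma miss_in_CM:
  assumes "compact K" "K \<subseteq> {0..t} \<times> UNIV"
  shows "{F \<in> closed_sets_on t. F \<inter> K = {}} \<in> sets (CM t)"
proof -
  have "openin (topology_generated_by
        ({{F. F \<inter> K = {}} | K. compact K \<and> K \<subseteq> {0..t} \<times> UNIV} \<union>
         {{F. F \<inter> G \<noteq> {}} | G. openin (top_of_set ({0..t} \<times> UNIV)) G})) {F. F \<inter> K = {}}"
    by (rule topology_generated_by_Basis) (use assms in blast)
  then have "openin (fell_topology t) ({F. F \<inter> K = {}} \<inter> closed_sets_on t)"
    unfolding fell_topology_def openin_subtopology by blast
  then show ?thesis by (intro open_in_CM) (simp add: Int_commute Collect_conj_eq)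
qed

lemma empty_in_CM:
  assumes "compact (UNIV :: 'l::topological_space set)"
  shows "{{}} \<in> sets (CM t :: (real \<times> 'l) set measure)"
proof -
  have "compact ({0..t} \<times> (UNIV::'l set))" using assms by (simp add: compact_Times)
  from miss_in_CM[OF this] have "{F \<in> closed_sets_on t. F \<inter> ({0..t} \<times> (UNIV::'l set)) = {}} \<in> sets (CM t)" by simp
  moreover have "{F \<in> closed_sets_on t. F \<inter> ({0..t} \<times> (UNIV::'l set)) = {}} = {{}}"
    by (auto simp: closed_sets_on_def)
  ultimately show ?thesis by simp
qed


definition fell_basis :: "real \<Rightarrow> (real \<times> 'l::topological_space) set set set" where
  "fell_basis t = ({{F. F \<inter> K = {}} | K. compact K \<and> K \<subseteq> {0..t} \<times> UNIV} \<union>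
         {{F. F \<inter> G \<noteq> {}} | G. openin (top_of_set ({0..t} \<times> UNIV)) G})"

lemma fell_topology_alt: "fell_topology t = subtopology (topology_generated_by (fell_basis t)) (closed_sets_on t)"
  unfolding fell_topology_def fell_basis_def ..

lemma ts_image_vimage:
  "time_scale t F \<inter> X = {} \<longleftrightarrow> F \<inter> ((\<lambda>(r, l). (r / t, l)) -` X) = {}"
  unfolding time_scale_def by auto

lemma ts_basis:
  fixes t :: real
  assumes t: "t > 0" and B: "B \<in> fell_basis 1"
  shows "time_scale t -` B \<in> (fell_basis t :: (real \<times> 'l::topological_space) set set set)"
proof -
  let ?h = "(\<lambda>(r, l). (r / t, l)) :: real \<times> 'l \<Rightarrow> real \<times> 'l"
  let ?g = "(\<lambda>(r, l). (r * t, l)) :: real \<times> 'l \<Rightarrow> real \<times> 'l"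
  have hg: "?h -` X = ?g ` X" for X
  proof
    show "?h -` X \<subseteq> ?g ` X"
    proof
      fix p assume "p \<in> ?h -` X"
      then have "(fst p / t, snd p) \<in> X" by (auto simp: case_prod_beta)
      moreover have "p = ?g (fst p / t, snd p)" using t by (auto simp: case_prod_beta)
      ultimately show "p \<in> ?g ` X" by blast
    qed
    show "?g ` X \<subseteq> ?h -` X" using t by auto
  qed
  have conth: "continuous_on UNIV ?h"
    unfolding case_prod_beta by (intro continuous_intros) (use t in auto)
  have contg: "continuous_on UNIV ?g"
    by (simp add: case_prod_beta continuous_intros)
  from B show ?thesis
    unfolding fell_basis_def
  proof (elim UnE CollectE exE conjE)
    fix K :: "(real \<times> 'l) set" assume BK: "B = {F. F \<inter> K = {}}" and K: "compact K" "K \<subseteq> {0..1} \<times> UNIV"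
    have "time_scale t -` B = {F. time_scale t F \<inter> K = {}}"
      using BK by auto
    also have "\<dots> = {F. F \<inter> ?h -` K = {}}"
      by (rule Collect_cong, rule ts_image_vimage)
    also have "\<dots> = {F. F \<inter> ?g ` K = {}}"
      by (simp only: hg)
    finally have "time_scale t -` B = {F. F \<inter> ?g ` K = {}}" .
    moreover have "compact (?g ` K)"
      by (rule compact_continuous_image[OF continuous_on_subset[OF contg] K(1)]) auto
    moreover have "?g ` K \<subseteq> {0..t} \<times> UNIV"
      using K(2) t by (auto simp: mult_le_cancel_right1)
    ultimately show "time_scale t -` B \<in> {{F. F \<inter> K = {}} |K. compact K \<and> K \<subseteq> {0..t} \<times> UNIV} \<union>
         {{F. F \<inter> G \<noteq> {}} |G. openin (top_of_set ({0..t} \<times> UNIV)) G}" by blast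
  next
    fix G :: "(real \<times> 'l) set" assume BG: "B = {F. F \<inter> G \<noteq> {}}" and G: "openin (top_of_set ({0..1} \<times> UNIV)) G"
    have "time_scale t -` B = {F. time_scale t F \<inter> G \<noteq> {}}"
      using BG by auto
    also have "\<dots> = {F. F \<inter> ?h -` G \<noteq> {}}"
      by (rule Collect_cong) (simp only: ts_image_vimage)
    finally have "time_scale t -` B = {F. F \<inter> ?h -` G \<noteq> {}}" .
    moreover have "openin (top_of_set ({0..t} \<times> UNIV)) (?h -` G)"
    proof -
      obtain W where W: "open W" "G = ({0..1} \<times> UNIV) \<inter> W"
        using G by (auto simp: openin_open)
      have "?h -` G = ({0..t} \<times> UNIV) \<inter> ?h -` W"
        using W(2) t by (auto simp: divide_le_eq_1 zero_le_divide_iff)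
      moreover have "open (?h -` W)"
        using open_vimage[OF W(1)] conth by (simp add: continuous_on_eq_continuous_at)
      ultimately show ?thesis by (auto simp: openin_open)
    qed
    ultimately show "time_scale t -` B \<in> {{F. F \<inter> K = {}} |K. compact K \<and> K \<subseteq> {0..t} \<times> UNIV} \<union>
         {{F. F \<inter> G \<noteq> {}} |G. openin (top_of_set ({0..t} \<times> UNIV)) G}" by blast
  qed
qed

lemma ts_gen:
  fixes t :: real
  assumes t: "t > 0" and T: "generate_topology_on (fell_basis 1) T"
  shows "generate_topology_on (fell_basis t :: (real \<times> 'l::topological_space) set set set) (time_scale t -` T)"
  using T
proof induct
  case Empty then show ?case by (simp add: generate_topology_on.Empty)
next
  case (Int a b) then show ?case by (simp add: generate_topology_on.Int vimage_Int)
next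
  case (UN K) then show ?case
    unfolding vimage_Union by (intro generate_topology_on.UN) auto
next
  case (Basis s) then show ?case using ts_basis[OF t] by (intro generate_topology_on.Basis)
qed

lemma ts_closed:
  fixes t :: real
  assumes t: "t > 0" and Z: "Z \<in> (closed_sets_on t :: (real \<times> 'l::topological_space) set set)"
  shows "time_scale t Z \<in> closed_sets_on 1"
proof -
  let ?g = "(\<lambda>p. (fst p * t, snd p)) :: real \<times> 'l \<Rightarrow> real \<times> 'l"
  have eq: "time_scale t Z = ?g -` Z"
  proof
    show "time_scale t Z \<subseteq> ?g -` Z" using t by (auto simp: time_scale_def)
    show "?g -` Z \<subseteq> time_scale t Z"
    proof
      fix p assume "p \<in> ?g -` Z"
      then have "(fst p * t, snd p) \<in> Z" by simp
      moreover have "p = (\<lambda>(r, l). (r / t, l)) (fst p * t, snd p)" using t by (simp add: case_prod_beta)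
      ultimately show "p \<in> time_scale t Z" unfolding time_scale_def by blast
    qed
  qed
  have "closed (?g -` Z)"
  proof (rule closed_vimage)
    show "closed Z" using Z by (simp add: closed_sets_on_def)
    show "continuous_on UNIV ?g" by (intro continuous_intros)
  qed
  moreover have "time_scale t Z \<subseteq> {0..1} \<times> UNIV"
    using Z t by (auto simp: closed_sets_on_def time_scale_def)
  ultimately show ?thesis using eq by (simp add: closed_sets_on_def)
qed

lemma ts_measurable:
  fixes t :: real
  assumes t: "t > 0"
  shows "time_scale t \<in> measurable (CM t :: (real \<times> 'l::topological_space) set measure) (CM 1)"
  unfolding CM_def[of 1]
proof (rule measurable_measure_of)
  show "{U. openin (fell_topology 1) U} \<subseteq> Pow (closed_sets_on 1)" by (auto dest: fell_open_sub)
  show "time_scale t \<in> space (CM t) \<rightarrow> closed_sets_on 1"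
    using ts_closed[OF t] by (auto simp: space_CM)
  fix U :: "(real \<times> 'l) set set" assume "U \<in> {U. openin (fell_topology 1) U}"
  then obtain T :: "(real \<times> 'l) set set" where T: "openin (topology_generated_by (fell_basis 1)) T" and U: "U = T \<inter> closed_sets_on 1"
    by (auto simp: fell_topology_alt openin_subtopology)
  have "generate_topology_on (fell_basis t :: (real \<times> 'l) set set set) (time_scale t -` T)"
    using ts_gen[OF t openin_topology_generated_by[OF T]] .
  then have "openin (fell_topology t) (time_scale t -` T \<inter> closed_sets_on t)"
    unfolding fell_topology_alt openin_subtopology openin_topology_generated_by_iff by blast
  moreover have "time_scale t -` U \<inter> space (CM t) = time_scale t -` T \<inter> closed_sets_on t"
    using ts_closed[OF t] by (auto simp: U space_CM)
  ultimately show "time_scale t -` U \<inter> space (CM t) \<in> sets (CM t)" by (simp add: open_in_CM)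
qed


locale mffl =
  fixes \<mu> :: "real \<Rightarrow> (real \<times> 'l::topological_space) set measure"
    and R :: "(real \<times> 'l) set set set"
    and \<Delta> :: "real \<Rightarrow> real \<Rightarrow> (real \<times> 'l) set \<Rightarrow> real"
  assumes cpt: "compact (UNIV :: 'l set)"
    and mff: "measurable_factorizing_family \<mu> R \<Delta>"
begin

lemma D1: "\<forall>t>0. prob_space (\<mu> t) \<and> sets (\<mu> t) = sets (CM t)"
  using mff unfolding measurable_factorizing_family_def by (elim conjE) assumption

lemma D2: "\<forall>s>0. \<forall>t>0. absolutely_continuous (\<mu> (s + t)) (concat_measure \<mu> s t) \<and>
                  absolutely_continuous (concat_measure \<mu> s t) (\<mu> (s + t))"
  using mff unfolding measurable_factorizing_family_def by (elim conjE) assumption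

lemma D3: "\<forall>t>0. \<forall>r\<in>{0..t}. emeasure (\<mu> t) {Z \<in> space (\<mu> t). Z \<inter> ({r} \<times> UNIV) \<noteq> {}} = 0"
  using mff unfolding measurable_factorizing_family_def by (elim conjE) assumption

lemma D4: "ring_of_sets (closed_sets_on 1) R"
  using mff unfolding measurable_factorizing_family_def by (elim conjE) assumption

lemma D5: "sigma_sets (closed_sets_on 1) R = sets (CM 1)"
  using mff unfolding measurable_factorizing_family_def by (elim conjE) assumption

lemma D6: "\<forall>A\<in>R. (\<lambda>t. measure (distr (\<mu> t) (CM 1) (time_scale t)) A) \<in> borel_measurable pos_reals"
  using mff unfolding measurable_factorizing_family_def by (elim conjE) assumption

lemma prob: "t > 0 \<Longrightarrow> prob_space (\<mu> t)"
  using D1 by simp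

lemma sets_mu: "t > 0 \<Longrightarrow> sets (\<mu> t) = sets (CM t)"
  using D1 by simp

lemma space_mu: "t > 0 \<Longrightarrow> space (\<mu> t) = closed_sets_on t"
  using sets_eq_imp_space_eq[OF sets_mu] space_CM by metis

lemma ac1: "s > 0 \<Longrightarrow> t > 0 \<Longrightarrow> absolutely_continuous (\<mu> (s + t)) (concat_measure \<mu> s t)"
  using D2 by simp

lemma ac2: "s > 0 \<Longrightarrow> t > 0 \<Longrightarrow> absolutely_continuous (concat_measure \<mu> s t) (\<mu> (s + t))"
  using D2 by simp

lemma noatom: "t > 0 \<Longrightarrow> r \<in> {0..t} \<Longrightarrow> emeasure (\<mu> t) {Z \<in> space (\<mu> t). Z \<inter> ({r} \<times> UNIV) \<noteq> {}} = 0"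
  using D3 by simp

lemma empty_sets: "{{}} \<in> sets (CM t :: (real \<times> 'l) set measure)"
  using empty_in_CM[OF cpt] .

lemma sets_concat: "sets (concat_measure \<mu> s t) = sets (CM (s + t))"
  unfolding concat_measure_def by simp

lemma space_concat: "space (concat_measure \<mu> s t) = closed_sets_on (s + t)"
  unfolding concat_measure_def by (simp add: space_CM)

lemma concat_emeasure:
  assumes s: "s > 0" and t: "t > 0" and A: "A \<in> sets (CM (s + t))"
  shows "emeasure (concat_measure \<mu> s t) A = emeasure (\<mu> s \<Otimes>\<^sub>M \<mu> t) (oplus s -` A \<inter> space (\<mu> s \<Otimes>\<^sub>M \<mu> t))"
proof -
  let ?P = "\<mu> s \<Otimes>\<^sub>M \<mu> t"
  let ?\<nu> = "\<lambda>A. emeasure ?P (oplus s -` A \<inter> space ?P)"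
  let ?\<Omega> = "space (CM (s + t) :: (real \<times> 'l) set measure)"
  have ss: "sigma_sets ?\<Omega> (sets (CM (s + t))) = sets (CM (s + t))"
    by (rule sets.sigma_sets_eq)
  have em: "emeasure (concat_measure \<mu> s t) B =
      (if B \<in> sets (CM (s + t)) \<and> measure_space ?\<Omega> (sets (CM (s + t))) ?\<nu> then ?\<nu> B else 0)" for B
    unfolding concat_measure_def distr_def emeasure_measure_of_conv ss ..
  have "measure_space ?\<Omega> (sets (CM (s + t))) ?\<nu>"
  proof (rule ccontr)
    assume nm: "\<not> ?thesis"
    have "?\<Omega> \<in> null_sets (concat_measure \<mu> s t)"
      using em[of ?\<Omega>] nm by (simp add: null_sets_def sets_concat)
    then have "?\<Omega> \<in> null_sets (\<mu> (s + t))"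
      using ac2[OF s t] unfolding absolutely_continuous_def by blast
    then have "emeasure (\<mu> (s + t)) (space (\<mu> (s + t))) = 0"
      using sets_eq_imp_space_eq[OF sets_mu[of "s + t"]] s t by (simp add: null_sets_def)
    moreover have "emeasure (\<mu> (s + t)) (space (\<mu> (s + t))) = 1"
      using prob[of "s + t"] s t by (simp add: prob_space.emeasure_space_1)
    ultimately show False by simp
  qed
  then show ?thesis using em[of A] A by simp
qed

lemma space_P: "s > 0 \<Longrightarrow> t > 0 \<Longrightarrow> space (\<mu> s \<Otimes>\<^sub>M \<mu> t) = closed_sets_on s \<times> closed_sets_on t"
  by (simp add: space_pair_measure space_mu)

lemma concat_empty:
  assumes s: "s > 0" and t: "t > 0"
  shows "emeasure (concat_measure \<mu> s t) {{}} = emeasure (\<mu> s) {{}} * emeasure (\<mu> t) {{}}"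
proof -
  interpret sigma_finite_measure "\<mu> t"
    using prob[OF t] by (rule prob_space_imp_sigma_finite)
  have "oplus s -` {{}} \<inter> space (\<mu> s \<Otimes>\<^sub>M \<mu> t) = {{}} \<times> {{}}"
    using s t by (auto simp: space_P oplus_def shift_set_def closed_sets_on_def)
  then show ?thesis
    using concat_emeasure[OF s t empty_sets] emeasure_pair_measure_Times[of "{{}}" "\<mu> s" "{{}}"]
      empty_sets sets_mu s t by simp
qed

lemma e_split:
  assumes s: "s > 0" and t: "t > 0"
  shows "emeasure (\<mu> (s + t)) {{}} \<noteq> 0 \<longleftrightarrow> emeasure (\<mu> s) {{}} \<noteq> 0 \<and> emeasure (\<mu> t) {{}} \<noteq> 0"
proof -
  have E1: "{{}} \<in> sets (\<mu> (s + t))" using sets_mu[of "s + t"] s t empty_sets by simp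
  have E2: "{{}} \<in> sets (concat_measure \<mu> s t)" using sets_concat empty_sets by simp
  have "emeasure (\<mu> (s + t)) {{}} = 0 \<longleftrightarrow> emeasure (concat_measure \<mu> s t) {{}} = 0"
    using ac1[OF s t] ac2[OF s t] E1 E2 unfolding absolutely_continuous_def null_sets_def by blast
  then show ?thesis using concat_empty[OF s t] by simp
qed

lemma compact_strip: "compact ({a..b::real} \<times> (UNIV :: 'l set))"
  using cpt by (simp add: compact_Times)

lemma miss_bound:
  assumes s: "s > 0" and t: "t > 0" and e: "emeasure (\<mu> s) {{}} = 0"
  shows "emeasure (\<mu> (s + t)) {F \<in> closed_sets_on (s + t). F \<inter> ({0..s} \<times> UNIV) = {}} = 0"
proof -
  let ?B = "{F \<in> closed_sets_on (s + t). F \<inter> ({0..s} \<times> (UNIV :: 'l set)) = {}}"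
  let ?P = "\<mu> s \<Otimes>\<^sub>M \<mu> t"
  have B: "?B \<in> sets (CM (s + t))"
    by (rule miss_in_CM[OF compact_strip]) (use t in auto)
  have sub: "oplus s -` ?B \<inter> space ?P \<subseteq> {{}} \<times> space (\<mu> t)"
  proof
    fix x assume x: "x \<in> oplus s -` ?B \<inter> space ?P"
    obtain Z1 Z2 where xz: "x = (Z1, Z2)" by (cases x)
    have "Z1 \<in> closed_sets_on s" "Z2 \<in> space (\<mu> t)" using x xz s t by (auto simp: space_P space_mu)
    moreover have "Z1 \<inter> ({0..s} \<times> UNIV) = {}" using x xz by (auto simp: oplus_def)
    ultimately have "Z1 = {}" by (auto simp: closed_sets_on_def)
    then show "x \<in> {{}} \<times> space (\<mu> t)" using xz \<open>Z2 \<in> space (\<mu> t)\<close> by simp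
  qed
  interpret sigma_finite_measure "\<mu> t"
    using prob[OF t] by (rule prob_space_imp_sigma_finite)
  have "emeasure (concat_measure \<mu> s t) ?B = emeasure ?P (oplus s -` ?B \<inter> space ?P)"
    by (rule concat_emeasure[OF s t B])
  also have "\<dots> \<le> emeasure ?P ({{}} \<times> space (\<mu> t))"
    by (rule emeasure_mono[OF sub]) (use empty_sets sets_mu s in \<open>auto intro!: pair_measureI\<close>)
  also have "\<dots> = emeasure (\<mu> s) {{}} * emeasure (\<mu> t) (space (\<mu> t))"
    by (rule emeasure_pair_measure_Times) (use empty_sets sets_mu s in auto)
  also have "\<dots> = 0" using e by simp
  finally have "?B \<in> null_sets (concat_measure \<mu> s t)"
    using B by (simp add: null_sets_def sets_concat)
  then have "?B \<in> null_sets (\<mu> (s + t))"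
    using ac2[OF s t] unfolding absolutely_continuous_def by blast
  then show ?thesis by (simp add: null_sets_def)
qed

lemma M0_cover:
  assumes F: "F \<in> closed_sets_on 1" and F0: "F \<inter> ({0} \<times> (UNIV :: 'l set)) = {}"
  shows "\<exists>n::nat. F \<inter> ({0..1 / (real n + 2)} \<times> UNIV) = {}"
proof (cases "F = {}")
  case True then show ?thesis by simp
next
  case False
  have "compact (F \<inter> ({0..1} \<times> UNIV))"
    using F compact_strip[of 0 1] by (intro closed_Int_compact) (auto simp: closed_sets_on_def)
  then have cF: "compact F" using F by (simp add: closed_sets_on_def Int_absorb2)
  then have c: "compact (fst ` F)" by (intro compact_continuous_image continuous_intros)
  have ne: "fst ` F \<noteq> {}" using False by simp
  obtain r0 where r0: "r0 \<in> fst ` F" "\<And>r. r \<in> fst ` F \<Longrightarrow> r0 \<le> r"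
    using compact_attains_inf[OF c ne] by auto
  have "r0 > 0"
  proof -
    obtain l where rl: "(r0, l) \<in> F" using r0(1) by force
    then have "r0 \<ge> 0" using F by (auto simp: closed_sets_on_def)
    moreover have "r0 \<noteq> 0" using rl F0 by auto
    ultimately show ?thesis by simp
  qed
  then obtain n where n: "inverse (real (Suc n)) < r0" using reals_Archimedean by blast
  have "1 / (real n + 2) < r0"
  proof -
    have "1 / (real n + 2) \<le> inverse (real (Suc n))" by (simp add: divide_simps)
    then show ?thesis using n by linarith
  qed
  then have "F \<inter> ({0..1 / (real n + 2)} \<times> UNIV) = {}"
    using r0(2) by force
  then show ?thesis by blast
qed

lemma e_small: "\<exists>n::nat. emeasure (\<mu> (1 / (real n + 2))) {{}} \<noteq> 0"
proof (rule ccontr)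
  assume "\<not> ?thesis"
  then have z: "emeasure (\<mu> (1 / (real n + 2))) {{}} = 0" for n by simp
  let ?B = "\<lambda>n::nat. {F \<in> closed_sets_on 1. F \<inter> ({0..1 / (real n + 2)} \<times> (UNIV :: 'l set)) = {}}"
  have p1: "prob_space (\<mu> 1)" by (rule prob) simp
  have Bnull: "?B n \<in> null_sets (\<mu> 1)" for n
  proof -
    let ?s = "1 / (real n + 2)"
    have s: "?s > 0" by simp
    have t: "1 - ?s > 0" by (simp add: divide_simps)
    have "emeasure (\<mu> (?s + (1 - ?s))) {F \<in> closed_sets_on (?s + (1 - ?s)). F \<inter> ({0..?s} \<times> (UNIV :: 'l set)) = {}} = 0"
      by (rule miss_bound[OF s t z])
    then have "emeasure (\<mu> 1) (?B n) = 0" by simp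
    moreover have "?B n \<in> sets (\<mu> 1)"
    proof -
      have s1: "?s \<le> 1" by (simp add: divide_simps)
      have "{0..?s} \<subseteq> {0..1}"
      proof
        fix a assume "a \<in> {0..?s}"
        then show "a \<in> {0..1}" using s1 by (metis atLeastAtMost_iff order_trans)
      qed
      then have "{0..?s} \<times> (UNIV :: 'l set) \<subseteq> {0..1} \<times> UNIV" by blast
      then show ?thesis using miss_in_CM[OF compact_strip, of 0 ?s 1] sets_mu[of 1] by simp
    qed
    ultimately show ?thesis by (simp add: null_sets_def)
  qed
  let ?M0 = "{F \<in> closed_sets_on 1. F \<inter> ({0} \<times> (UNIV :: 'l set)) = {}}"
  have z01: "{0::real} \<times> (UNIV :: 'l set) \<subseteq> {0..1} \<times> UNIV" by auto
  have M0s: "?M0 \<in> sets (\<mu> 1)"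
    using miss_in_CM[OF compact_strip, of 0 0 1] sets_mu[of 1] z01 by simp
  have "?M0 \<subseteq> (\<Union>n. ?B n)" using M0_cover by blast
  moreover have "(\<Union>n. ?B n) \<in> null_sets (\<mu> 1)" using Bnull by (intro null_sets_UN) auto
  ultimately have M0n: "?M0 \<in> null_sets (\<mu> 1)" using M0s null_sets_subset by blast
  have "space (\<mu> 1) - ?M0 = {Z \<in> space (\<mu> 1). Z \<inter> ({0} \<times> UNIV) \<noteq> {}}"
    by (auto simp: space_mu)
  then have "emeasure (\<mu> 1) (space (\<mu> 1) - ?M0) = 0" using noatom[of 1 0] by simp
  then have "space (\<mu> 1) - ?M0 \<in> null_sets (\<mu> 1)" using M0s by (auto simp: null_sets_def)
  then have "(space (\<mu> 1) - ?M0) \<union> ?M0 \<in> null_sets (\<mu> 1)" using M0n by (rule null_sets.Un)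
  moreover have "(space (\<mu> 1) - ?M0) \<union> ?M0 = space (\<mu> 1)" by (auto simp: space_mu)
  ultimately have "emeasure (\<mu> 1) (space (\<mu> 1)) = 0" by (simp add: null_sets_def)
  then show False using prob_space.emeasure_space_1[OF p1] by simp
qed

lemma e_mult:
  assumes "\<epsilon> > 0" "emeasure (\<mu> \<epsilon>) {{}} \<noteq> 0"
  shows "emeasure (\<mu> (real (Suc k) * \<epsilon>)) {{}} \<noteq> 0"
proof (induction k)
  case 0 then show ?case using assms by simp
next
  case (Suc k)
  have "real (Suc (Suc k)) * \<epsilon> = real (Suc k) * \<epsilon> + \<epsilon>" by (simp add: algebra_simps)
  moreover have "real (Suc k) * \<epsilon> > 0" using assms by simp
  ultimately show ?case using e_split[of "real (Suc k) * \<epsilon>" \<epsilon>] Suc assms by simp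
qed

lemma e_pos: assumes T: "T > 0" shows "emeasure (\<mu> T) {{}} \<noteq> 0"
proof -
  obtain n :: nat where n: "emeasure (\<mu> (1 / (real n + 2))) {{}} \<noteq> 0" using e_small by blast
  let ?\<epsilon> = "1 / (real n + 2)"
  have \<epsilon>: "?\<epsilon> > 0" by simp
  obtain k :: nat where k: "T / ?\<epsilon> < real k" using reals_Archimedean2 by blast
  have kT: "T < real (Suc k) * ?\<epsilon>"
  proof -
    have "T < real k * ?\<epsilon>" using k pos_divide_less_eq[OF \<epsilon>, of T "real k"] by blast
    also have "\<dots> \<le> real (Suc k) * ?\<epsilon>" using \<epsilon> by (intro mult_right_mono) auto
    finally show ?thesis .
  qed
  have "emeasure (\<mu> (real (Suc k) * ?\<epsilon>)) {{}} \<noteq> 0" by (rule e_mult[OF \<epsilon> n])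
  moreover have "real (Suc k) * ?\<epsilon> = T + (real (Suc k) * ?\<epsilon> - T)" by simp
  ultimately have "emeasure (\<mu> (T + (real (Suc k) * ?\<epsilon> - T))) {{}} \<noteq> 0" by simp
  then show ?thesis using e_split[of T "real (Suc k) * ?\<epsilon> - T"] T kT by simp
qed

abbreviation pe :: "real \<Rightarrow> real" where "pe t \<equiv> measure (\<mu> t) {{}}"

lemma emeasure_pe: assumes t: "t > 0" shows "emeasure (\<mu> t) A = ennreal (measure (\<mu> t) A)"
proof -
  interpret prob_space "\<mu> t" using prob[OF t] .
  show ?thesis by (rule emeasure_eq_measure)
qed

lemma pe_pos: assumes t: "t > 0" shows "pe t > 0"
proof -
  have "ennreal (pe t) \<noteq> 0" using e_pos[OF t] emeasure_pe[OF t] by simp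
  then show ?thesis using measure_nonneg[of "\<mu> t" "{{}}"] by (simp add: less_le)
qed

lemma space_pos_reals: "space pos_reals = {0<..}"
  by (simp add: pos_reals_def space_restrict_space)

lemma ts_meas_mu: "t > 0 \<Longrightarrow> time_scale t \<in> measurable (\<mu> t) (CM 1)"
  using ts_measurable[of t] measurable_cong_sets[OF sets_mu[of t] refl] by blast

lemma pe_meas: "(\<lambda>t. pe t) \<in> borel_measurable pos_reals"
proof -
  let ?D = "\<lambda>t. distr (\<mu> t) (CM 1) (time_scale t)"
  have Dp: "t > 0 \<Longrightarrow> prob_space (?D t)" for t
    using prob_space.prob_space_distr[OF prob ts_meas_mu] by simp
  interpret R: ring_of_sets "closed_sets_on 1" R by (rule D4)
  have IS: "Int_stable R" by (auto simp: Int_stable_def)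
  have key: "(\<lambda>t. measure (?D t) A) \<in> borel_measurable pos_reals"
    if A: "A \<in> sigma_sets (closed_sets_on 1) R" for A
    using IS R.space_closed A
  proof (induction rule: sigma_sets_induct_disjoint)
    case (basic A) then show ?case using D6 by blast
  next
    case empty then show ?case by simp
  next
    case (compl A)
    have As: "A \<in> sets (CM 1)" using compl(1) D5 by simp
    have "(\<lambda>t. 1 - measure (?D t) A) \<in> borel_measurable pos_reals"
      using compl(2) by measurable
    moreover have "measure (?D t) (closed_sets_on 1 - A) = 1 - measure (?D t) A" if "t \<in> space pos_reals" for t
    proof -
      have t: "t > 0" using that space_pos_reals by simp
      interpret prob_space "?D t" using Dp[OF t] .
      show ?thesis using prob_compl[of A] As by (simp add: space_CM)
    qed
    ultimately show ?case using measurable_cong by (smt (verit))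
  next
    case (union A)
    have As: "range A \<subseteq> sets (CM 1)" using union(2) D5 by simp
    let ?u = "\<lambda>n t. \<Sum>i<n. measure (?D t) (A i)"
    have "(\<lambda>n. ?u n t) \<longlonglongrightarrow> measure (?D t) (\<Union>i. A i)" if "t \<in> space pos_reals" for t
    proof -
      have t: "t > 0" using that space_pos_reals by simp
      interpret prob_space "?D t" using Dp[OF t] .
      have "(\<lambda>i. measure (?D t) (A i)) sums measure (?D t) (\<Union>i. A i)"
        by (rule measure_UNION) (use As union(1) in auto)
      then show ?thesis by (simp add: sums_def)
    qed
    moreover have "?u n \<in> borel_measurable pos_reals" for n
      using union(3) by measurable
    ultimately show ?case by (rule borel_measurable_LIMSEQ_real)
  qed
  have E: "{{}} \<in> sigma_sets (closed_sets_on 1) R" using empty_sets D5 by simp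
  have "measure (?D t) {{}} = pe t" if "t \<in> space pos_reals" for t
  proof -
    have t: "t > 0" using that space_pos_reals by simp
    have e0: "{} \<in> closed_sets_on t" by (simp add: closed_sets_on_def)
    have tse: "time_scale t Z = {} \<longleftrightarrow> Z = {}" for Z by (simp add: time_scale_def)
    have "time_scale t -` {{}} \<inter> space (\<mu> t) = {{}}"
      using e0 by (auto simp: tse space_mu[OF t])
    then show ?thesis using measure_distr[OF ts_meas_mu[OF t] empty_sets] by simp
  qed
  then show ?thesis using key[OF E] measurable_cong by (smt (verit))
qed

lemma delta_empty:
  assumes s: "s > 0" and t: "t > 0"
  shows "Delta_st \<mu> s t {} = pe s * pe t / pe (s + t)"
proof -
  have st: "s + t > 0" using s t by simp
  interpret sigma_finite_measure "\<mu> (s + t)"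
    using prob[OF st] by (rule prob_space_imp_sigma_finite)
  let ?N = "concat_measure \<mu> s t"
  let ?RN = "RN_deriv (\<mu> (s + t)) ?N"
  have dens: "density (\<mu> (s + t)) ?RN = ?N"
    by (rule density_RN_deriv[OF ac1[OF s t]]) (simp add: sets_concat sets_mu[OF st])
  have E: "{{}} \<in> sets (\<mu> (s + t))" using sets_mu[OF st] empty_sets by simp
  have "emeasure ?N {{}} = emeasure (density (\<mu> (s + t)) ?RN) {{}}" by (simp add: dens)
  also have "\<dots> = (\<integral>\<^sup>+ x. ?RN x * indicator {{}} x \<partial>\<mu> (s + t))"
    by (rule emeasure_density[OF borel_measurable_RN_deriv E])
  also have "\<dots> = ?RN {} * emeasure (\<mu> (s + t)) {{}}"
    using E by simp
  finally have eq: "?RN {} * ennreal (pe (s + t)) = ennreal (pe s * pe t)"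
    using concat_empty[OF s t] emeasure_pe[OF s] emeasure_pe[OF t] emeasure_pe[OF st]
    by (simp add: ennreal_mult measure_nonneg)
  have c: "pe (s + t) > 0" using pe_pos[OF st] .
  have one: "pe (s + t) * (1 / pe (s + t)) = 1" using c by simp
  have "?RN {} = ?RN {} * ennreal (pe (s + t) * (1 / pe (s + t)))" by (simp only: one ennreal_1 mult_1_right)
  also have "\<dots> = ?RN {} * ennreal (pe (s + t)) * ennreal (1 / pe (s + t))"
  proof -
    have em: "ennreal (pe (s + t) * (1 / pe (s + t))) = ennreal (pe (s + t)) * ennreal (1 / pe (s + t))"
      by (rule ennreal_mult) (use c in auto)
    show ?thesis by (simp only: em mult.assoc)
  qed
  also have "\<dots> = ennreal (pe s * pe t) * ennreal (1 / pe (s + t))" by (simp add: eq)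
  also have "\<dots> = ennreal (pe s * pe t / pe (s + t))"
    using c by (simp add: ennreal_mult[symmetric] measure_nonneg)
  finally show ?thesis
    unfolding Delta_st_def using c by (simp add: measure_nonneg)
qed

lemma ind_meas:
  fixes c :: "'b::{second_countable_topology, real_normed_vector}"
    and M :: "'c set measure"
  assumes E: "{{}} \<in> sets M"
  shows "(\<lambda>Z. if Z = {} then c else 0) \<in> borel_measurable M"
proof -
  have eq: "(\<lambda>Z::'c set. if Z = {} then c else 0) = (\<lambda>Z. indicator {{}} Z *\<^sub>R c)"
    by (auto simp: indicator_def fun_eq_iff)
  have "(\<lambda>Z::'c set. indicator {{}} Z *\<^sub>R c) \<in> borel_measurable M"
    using E by measurable
  then show ?thesis by (simp only: eq)
qed

definition uu :: "real \<Rightarrow> (real \<times> 'l) set \<Rightarrow> complex" where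
  "uu t Z = (if Z = {} then complex_of_real (1 / sqrt (pe t)) else 0)"

lemma uu_L2: assumes t: "t > 0" shows "in_L2 (\<mu> t) (uu t)"
proof -
  have E: "{{}} \<in> sets (\<mu> t)" using sets_mu[OF t] empty_sets by simp
  interpret prob_space "\<mu> t" using prob[OF t] .
  have m: "uu t \<in> borel_measurable (\<mu> t)"
    unfolding uu_def[abs_def] by (rule ind_meas[OF E])
  have eq: "(\<lambda>x. (cmod (uu t x))\<^sup>2) = (\<lambda>x. if x = {} then (cmod (complex_of_real (1 / sqrt (pe t))))\<^sup>2 else 0)"
    by (auto simp: uu_def fun_eq_iff)
  have "integrable (\<mu> t) (\<lambda>x. if x = {} then (cmod (complex_of_real (1 / sqrt (pe t))))\<^sup>2 else 0)"
    by (rule integrable_const_bound[where B = "(cmod (complex_of_real (1 / sqrt (pe t))))\<^sup>2"])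
       (auto intro!: ind_meas[OF E])
  then show ?thesis unfolding in_L2_def using m eq by simp
qed

lemma uu_integral:
  assumes t: "t > 0"
  shows "(\<integral>Z. uu t Z * indicator A (time_scale t Z) \<partial>\<mu> t) = complex_of_real (sqrt (pe t) * indicator A {})"
proof -
  have E: "{{}} \<in> sets (\<mu> t)" using sets_mu[OF t] empty_sets by simp
  interpret prob_space "\<mu> t" using prob[OF t] .
  let ?k = "complex_of_real (1 / sqrt (pe t) * indicator A {})"
  have tse: "time_scale t {} = {}" by (simp add: time_scale_def)
  have "(\<lambda>Z. uu t Z * indicator A (time_scale t Z)) = (\<lambda>Z. indicator {{}} Z *\<^sub>R ?k)"
    by (auto simp: uu_def fun_eq_iff tse indicator_def)
  then have "(\<integral>Z. uu t Z * indicator A (time_scale t Z) \<partial>\<mu> t) = (\<integral>Z. indicator {{}} Z *\<^sub>R ?k \<partial>\<mu> t)"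
    by simp
  also have "\<dots> = (\<integral>Z. indicator {{}} Z \<partial>\<mu> t) *\<^sub>R ?k"
    by (rule integral_scaleR_left) (use E in \<open>auto intro!: integrable_real_indicator simp: less_top[symmetric]\<close>)
  also have "\<dots> = pe t *\<^sub>R ?k"
    using E by (simp add: Int_absorb2 sets.sets_into_space)
  also have "\<dots> = complex_of_real (pe t * (1 / sqrt (pe t) * indicator A {}))"
    by (simp add: scaleR_conv_of_real)
  also have "pe t * (1 / sqrt (pe t) * indicator A {}) = sqrt (pe t) * indicator A {}"
  proof -
    have q: "pe t / sqrt (pe t) = sqrt (pe t)" using pe_pos[OF t] by (simp add: real_div_sqrt)
    have "pe t * (1 / sqrt (pe t) * indicator A {}) = (pe t / sqrt (pe t)) * indicator A {}" by simp
    then show ?thesis by (simp only: q)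
  qed
  finally show ?thesis .
qed

lemma uu_borel_section: "borel_section \<mu> R uu"
  unfolding borel_section_def
proof (intro conjI allI impI ballI)
  show "in_L2 (\<mu> t) (uu t)" if "t > 0" for t using uu_L2 that .
  fix A assume "A \<in> R"
  have "(\<lambda>t. complex_of_real (sqrt (pe t) * indicator A {})) \<in> borel_measurable pos_reals"
    using pe_meas by measurable
  moreover have "(\<integral>Z. uu t Z * indicator A (time_scale t Z) \<partial>\<mu> t) = complex_of_real (sqrt (pe t) * indicator A {})"
    if "t \<in> space pos_reals" for t
    using uu_integral that space_pos_reals by simp
  ultimately show "(\<lambda>t. \<integral>Z. uu t Z * indicator A (time_scale t Z) \<partial>\<mu> t) \<in> borel_measurable pos_reals"
    using measurable_cong by (smt (verit))
qed

lemma uu_nonzero: "\<not> (AE Z in \<mu> 1. uu 1 Z = 0)"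
proof
  assume ae: "AE Z in \<mu> 1. uu 1 Z = 0"
  have E: "{{}} \<in> sets (\<mu> 1)" using sets_mu[of 1] empty_sets by simp
  have e0: "{} \<in> space (\<mu> 1)" by (simp add: space_mu closed_sets_on_def)
  have "{Z \<in> space (\<mu> 1). \<not> uu 1 Z = 0} = {{}}"
    using e0 pe_pos[of 1] by (auto simp: uu_def)
  then have "emeasure (\<mu> 1) {{}} = 0"
    using ae AE_iff_measurable[of "{Z \<in> space (\<mu> 1). \<not> uu 1 Z = 0}" "\<mu> 1" "\<lambda>Z. uu 1 Z = 0"] E by simp
  then show False using e_pos[of 1] by simp
qed

lemma uu_mult:
  assumes s: "s > 0" and t: "t > 0"
  shows "AE Z in \<mu> (s + t). uu (s + t) Z = U_prod \<mu> s t (uu s) (uu t) Z"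
proof (rule AE_I2)
  fix Z assume Z: "Z \<in> space (\<mu> (s + t))"
  then have Zs: "Z \<subseteq> {0..s + t} \<times> UNIV" using s t by (simp add: space_mu closed_sets_on_def)
  show "uu (s + t) Z = U_prod \<mu> s t (uu s) (uu t) Z"
  proof (cases "Z = {}")
    case True
    have ps: "pe s > 0" and pt: "pe t > 0" and pst: "pe (s + t) > 0"
      using pe_pos s t by auto
    have "sqrt (pe s * pe t / pe (s + t)) * (1 / sqrt (pe s)) * (1 / sqrt (pe t)) = 1 / sqrt (pe (s + t))"
      using ps pt pst by (simp add: real_sqrt_mult real_sqrt_divide field_simps)
    then have "complex_of_real (1 / sqrt (pe (s + t))) =
        complex_of_real (sqrt (pe s * pe t / pe (s + t))) * complex_of_real (1 / sqrt (pe s)) * complex_of_real (1 / sqrt (pe t))"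
      by (metis of_real_mult)
    then show ?thesis using True
      by (simp add: U_prod_def uu_def delta_empty[OF s t])
  next
    case False
    then obtain r l where rl: "(r, l) \<in> Z" by auto
    then have r: "0 \<le> r" "r \<le> s + t" using Zs by auto
    show ?thesis
    proof (cases "r \<le> s")
      case True
      then have "Z \<inter> ({0..s} \<times> UNIV) \<noteq> {}" using rl r by auto
      then show ?thesis using False by (simp add: U_prod_def uu_def)
    next
      case False2: False
      then have "(r - s, l) \<in> (\<lambda>(r, l). (r - s, l)) ` (Z \<inter> ({s..s + t} \<times> UNIV))"
        using rl r by force
      then have "(\<lambda>(r, l). (r - s, l)) ` (Z \<inter> ({s..s + t} \<times> UNIV)) \<noteq> {}" by blast
      then show ?thesis using False by (simp add: U_prod_def uu_def)
    qed
  qed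
qed

lemma spatial: "spatial_random_set_system \<mu> R"
  unfolding spatial_random_set_system_def is_unit_def
  using uu_borel_section uu_nonzero uu_mult by (intro exI[of _ uu] conjI) (auto intro!: exI[of _ 1])

end

theorem corollary3p3:
  fixes \<mu> :: "real \<Rightarrow> (real \<times> 'l::{second_countable_topology, t2_space}) set measure"
    and R :: "(real \<times> 'l) set set set"
    and \<Delta> :: "real \<Rightarrow> real \<Rightarrow> (real \<times> 'l) set \<Rightarrow> real"
  assumes "compact (UNIV :: 'l set)"
    and "measurable_factorizing_family \<mu> R \<Delta>"
  shows "spatial_random_set_system \<mu> R"
proof -
  interpret mffl \<mu> R \<Delta> using assms by unfold_locales
  show ?thesis by (rule spatial)
qed

end
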